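(* Let $F=A^\sharp\circ B\circ P$, i.e. $F(x)=A^\sharp(B\odot(Px))$ for $x\in\mathbb{T}^n$, where $A\in\mathbb{T}^{m\times n}$ has at least one finite entry per column, $B\in\mathbb{T}^{m\times q}$ has at least one finite entry per row, the finite entries of $A$ and $B$ are integers, and $P\in\mathbb{R}^{q\times n}$ is row-stochastic with $P_{il}=Q_{il}/M$ for integers $Q_{il}$ and a positive integer $M$. Suppose that $F$ has a bias vector and that $\rho(F)\ne0$. Let $k$ be the number of nondeterministic states. Then $\operatorname{cond}(F)=|\rho(F)|^{-1}\le nM^{\min\{k,n-1\}}$.
   Context: $\mathbb{T}=\mathbb{R}\cup\{-\infty\}$. For $C\in\mathbb{T}^{r\times s}$, $z\in\mathbb{T}^s$: $(C\odot z)_i=\max_j(C_{ij}+z_j)$; the adjoint is $C^\sharp(y)_j=\min_i(-C_{ij}+y_i)$, with $(+\infty)+(-\infty)=+\infty$. $Pz$ is the usual matrix-vector product with $0\cdot(-\infty)=0$. Row-stochastic: nonnegative entries, rows summing to $1$. A state $i\in\{1,\dots,q\}$ is nondeterministic if there are at least two indices $l\ne l'$ in $\{1,\dots,n\}$ with $P_{il}>0$ and $P_{il'}>0$. A bias vector is $v\in\mathbb{R}^n$ with $F(v)=\lambda+v$ for some $\lambda\in\mathbb{R}$ (entrywise addition); this $\lambda$ is unique and is the ergodic constant $\rho(F)$. $\operatorname{cond}(F)$ denotes $|\rho(F)|^{-1}$. *)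

theory Defs
  imports "HOL-Analysis.Analysis"
begin

text \<open>Tropical semiring T = R \<union> {-\<infinity>}, represented inside ereal.
  Vectors are functions nat \<Rightarrow> _ indexed by 0..<dim, matrices nat \<Rightarrow> nat \<Rightarrow> _.
  The ereal addition satisfies (+\<infinity>) + (-\<infinity>) = +\<infinity>, as required for the adjoint.\<close>

definition trop_mult :: "(nat \<Rightarrow> nat \<Rightarrow> ereal) \<Rightarrow> nat \<Rightarrow> (nat \<Rightarrow> ereal) \<Rightarrow> nat \<Rightarrow> ereal" where
  "trop_mult C s z = (\<lambda>i. SUP j\<in>{..<s}. C i j + z j)"

definition trop_adj :: "(nat \<Rightarrow> nat \<Rightarrow> ereal) \<Rightarrow> nat \<Rightarrow> (nat \<Rightarrow> ereal) \<Rightarrow> nat \<Rightarrow> ereal" where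
  "trop_adj C r y = (\<lambda>j. INF i\<in>{..<r}. - C i j + y i)"

definition mat_vec :: "(nat \<Rightarrow> nat \<Rightarrow> real) \<Rightarrow> nat \<Rightarrow> (nat \<Rightarrow> real) \<Rightarrow> nat \<Rightarrow> real" where
  "mat_vec P n x = (\<lambda>l. \<Sum>j<n. P l j * x j)"

definition shapley_F ::
  "(nat \<Rightarrow> nat \<Rightarrow> ereal) \<Rightarrow> (nat \<Rightarrow> nat \<Rightarrow> ereal) \<Rightarrow> (nat \<Rightarrow> nat \<Rightarrow> real) \<Rightarrow> nat \<Rightarrow> nat \<Rightarrow> nat
    \<Rightarrow> (nat \<Rightarrow> real) \<Rightarrow> nat \<Rightarrow> ereal" where
  "shapley_F A B P m n q x = trop_adj A m (trop_mult B q (\<lambda>l. ereal (mat_vec P n x l)))"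

definition is_bias :: "((nat \<Rightarrow> real) \<Rightarrow> nat \<Rightarrow> ereal) \<Rightarrow> nat \<Rightarrow> (nat \<Rightarrow> real) \<Rightarrow> real \<Rightarrow> bool" where
  "is_bias F n v c \<longleftrightarrow> (\<forall>j<n. F v j = ereal (c + v j))"

definition row_stochastic :: "(nat \<Rightarrow> nat \<Rightarrow> real) \<Rightarrow> nat \<Rightarrow> nat \<Rightarrow> bool" where
  "row_stochastic P q n \<longleftrightarrow> (\<forall>i<q. (\<forall>l<n. P i l \<ge> 0) \<and> (\<Sum>l<n. P i l) = 1)"

definition nondet_states :: "(nat \<Rightarrow> nat \<Rightarrow> real) \<Rightarrow> nat \<Rightarrow> nat \<Rightarrow> nat set" where
  "nondet_states P q n = {i. i < q \<and> (\<exists>l l'. l < n \<and> l' < n \<and> l \<noteq> l' \<and> P i l > 0 \<and> P i l' > 0)}"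

definition trop_int_entry :: "ereal \<Rightarrow> bool" where
  "trop_int_entry a \<longleftrightarrow> a = -\<infinity> \<or> (\<exists>z::int. a = ereal (of_int z))"

end

theory Submission
  imports Defs
begin


lemma funpow_agree:
  assumes "\<forall>z. z \<noteq> x \<longrightarrow> G z = F z" and "\<forall>j<i. (F^^j) y \<noteq> x"
  shows "(G^^i) y = (F^^i) y"
  using assms(2)
proof (induction i)
  case 0 then show ?case by simp
next
  case (Suc i)
  then have IH: "(G^^i) y = (F^^i) y" by simp
  have "(F^^i) y \<noteq> x" using Suc.prems by simp
  then show ?case using IH assms(1) by simp
qed

lemma reach_agree:
  assumes "\<forall>z. z \<noteq> x \<longrightarrow> G z = F z" and "(F^^m) y = x"
  shows "\<exists>m'. (G^^m') y = x"
proof -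
  define m0 where "m0 = (LEAST m. (F^^m) y = x)"
  have h0: "(F^^m0) y = x" unfolding m0_def using assms(2) by (rule LeastI)
  have "\<forall>j<m0. (F^^j) y \<noteq> x" unfolding m0_def using not_less_Least by blast
  then have "(G^^m0) y = (F^^m0) y" using funpow_agree[OF assms(1)] by blast
  then show ?thesis using h0 by metis
qed

locale chain =
  fixes X :: "'s set" and E :: "'s \<Rightarrow> 'c set" and w :: "'s \<Rightarrow> 'c \<Rightarrow> real"
    and s :: "'s \<Rightarrow> 'c \<Rightarrow> 's"
  assumes finX: "finite X" and finE: "\<And>x. x \<in> X \<Longrightarrow> finite (E x)"
    and neE: "\<And>x. x \<in> X \<Longrightarrow> E x \<noteq> {}"
    and wsum: "\<And>x. x \<in> X \<Longrightarrow> (\<Sum>a\<in>E x. w x a) = 1"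
    and wpos: "\<And>x a. x \<in> X \<Longrightarrow> a \<in> E x \<Longrightarrow> w x a > 0"
    and sX: "\<And>x a. x \<in> X \<Longrightarrow> a \<in> E x \<Longrightarrow> s x a \<in> X"
begin

definition Fa :: "('s \<Rightarrow> 'c) \<Rightarrow> 's \<Rightarrow> 's" where "Fa \<alpha> z = s z (\<alpha> z)"
definition reach where "reach \<alpha> x \<longleftrightarrow> (\<forall>y\<in>X. \<exists>m. (Fa \<alpha> ^^ m) y = x)"
definition W where "W Y \<alpha> = (\<Prod>y\<in>Y. w y (\<alpha> y))"
definition a0 where "a0 x = (SOME a. a \<in> E x)"
definition K where
  "K x = (\<Sum>\<beta>\<in>PiE (X - {x}) E. W (X - {x}) \<beta> * (if reach (\<beta>(x := a0 x)) x then 1 else 0))"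

lemma reach_cong:
  assumes "\<forall>z. z \<noteq> x \<longrightarrow> Fa \<alpha>' z = Fa \<alpha> z"
  shows "reach \<alpha>' x \<longleftrightarrow> reach \<alpha> x"
proof -
  have s2: "\<forall>z. z \<noteq> x \<longrightarrow> Fa \<alpha> z = Fa \<alpha>' z" using assms by metis
  show ?thesis unfolding reach_def using reach_agree[OF assms] reach_agree[OF s2] by metis
qed

lemma reach_upd: "reach (\<alpha>(x := b)) x \<longleftrightarrow> reach (\<alpha>(x := c)) x"
  by (rule reach_cong) (simp add: Fa_def)

lemma iter_in: "\<alpha> \<in> PiE X E \<Longrightarrow> y \<in> X \<Longrightarrow> (Fa \<alpha> ^^ m) y \<in> X"
  by (induction m) (auto simp: Fa_def intro: sX)

lemma Fa_in: "\<alpha> \<in> PiE X E \<Longrightarrow> y \<in> X \<Longrightarrow> Fa \<alpha> y \<in> X"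
  by (auto simp: Fa_def intro: sX)

lemma Z_sum:
  fixes u :: "'s \<Rightarrow> real"
  assumes al: "\<alpha> \<in> PiE X E"
  shows "(\<Sum>x\<in>{x\<in>X. reach \<alpha> x}. u (Fa \<alpha> x) - u x) = 0"
proof -
  let ?Z = "{x\<in>X. reach \<alpha> x}"
  let ?F = "Fa \<alpha>"
  have sub1: "?F ` ?Z \<subseteq> ?Z"
  proof
    fix z assume "z \<in> ?F ` ?Z"
    then obtain x where x: "x \<in> ?Z" "z = ?F x" by blast
    have "z \<in> X" using x Fa_in[OF al] by blast
    moreover have "reach \<alpha> z" unfolding reach_def
    proof
      fix y assume "y \<in> X"
      then obtain m where "(?F ^^ m) y = x" using x unfolding reach_def by blast
      then have "(?F ^^ Suc m) y = z" using x by simp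
      then show "\<exists>m. (?F ^^ m) y = z" by blast
    qed
    ultimately show "z \<in> ?Z" by blast
  qed
  have sub2: "?Z \<subseteq> ?F ` ?Z"
  proof
    fix z assume z: "z \<in> ?Z"
    then have "?F z \<in> X" using Fa_in[OF al] by blast
    then obtain m where m: "(?F ^^ m) (?F z) = z" using z unfolding reach_def by blast
    define x where "x = (?F ^^ m) z"
    have Fx: "?F x = z" using m unfolding x_def by (metis comp_apply funpow_Suc_right funpow_swap1)
    have "x \<in> X" unfolding x_def using iter_in[OF al] z by blast
    moreover have "reach \<alpha> x" unfolding reach_def
    proof
      fix y assume "y \<in> X"
      then obtain m' where "(?F ^^ m') y = z" using z unfolding reach_def by blast
      then have "(?F ^^ (m + m')) y = x" unfolding x_def by (simp add: funpow_add)
      then show "\<exists>m. (?F ^^ m) y = x" by blast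
    qed
    ultimately show "z \<in> ?F ` ?Z" using Fx by blast
  qed
  have img: "?F ` ?Z = ?Z" using sub1 sub2 by blast
  have finZ: "finite ?Z" using finX by simp
  have inj: "inj_on ?F ?Z" using img finZ by (simp add: eq_card_imp_inj_on)
  have "(\<Sum>x\<in>?Z. u (?F x)) = (\<Sum>x\<in>?F ` ?Z. u x)" using inj by (simp add: sum.reindex)
  also have "\<dots> = (\<Sum>x\<in>?Z. u x)" using img by simp
  finally show ?thesis by (simp add: sum_subtractf)
qed

lemma decomp:
  assumes "x \<in> X"
  shows "(\<Sum>\<alpha>\<in>PiE X E. G \<alpha>) = (\<Sum>a\<in>E x. \<Sum>\<beta>\<in>PiE (X-{x}) E. G (\<beta>(x:=a)))"
proof -
  have X: "X = insert x (X - {x})" using assms by blast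
  have "PiE X E = (\<lambda>(y, g). g(x := y)) ` (E x \<times> PiE (X - {x}) E)"
    by (subst X) (rule PiE_insert_eq)
  moreover have "inj_on (\<lambda>(y, g). g(x := y)) (E x \<times> PiE (X - {x}) E)"
    by (rule inj_combinator) simp
  ultimately have "(\<Sum>\<alpha>\<in>PiE X E. G \<alpha>) = (\<Sum>p\<in>E x \<times> PiE (X - {x}) E. G ((\<lambda>(y, g). g(x := y)) p))"
    by (simp add: sum.reindex)
  also have "\<dots> = (\<Sum>a\<in>E x. \<Sum>\<beta>\<in>PiE (X-{x}) E. G (\<beta>(x:=a)))"
    by (simp add: sum.cartesian_product) (intro sum.cong refl, auto)
  finally show ?thesis .
qed

lemma W_upd:
  assumes "x \<in> X"
  shows "W X (\<beta>(x:=a)) = w x a * W (X - {x}) \<beta>"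
proof -
  have "W X (\<beta>(x:=a)) = w x ((\<beta>(x:=a)) x) * (\<Prod>y\<in>X - {x}. w y ((\<beta>(x:=a)) y))"
    unfolding W_def by (rule prod.remove[OF finX assms])
  then have "W X (\<beta>(x:=a)) = w x a * (\<Prod>y\<in>X - {x}. w y ((\<beta>(x:=a)) y))" by simp
  also have "(\<Prod>y\<in>X - {x}. w y ((\<beta>(x:=a)) y)) = W (X - {x}) \<beta>"
    unfolding W_def by (rule prod.cong) auto
  finally show ?thesis .
qed

lemma L:
  assumes xX: "x \<in> X"
  shows "(\<Sum>\<alpha>\<in>PiE X E. W X \<alpha> * (if reach \<alpha> x then \<phi> (\<alpha> x) else 0))
     = K x * (\<Sum>a\<in>E x. w x a * \<phi> a)"
proof -
  have "(\<Sum>\<alpha>\<in>PiE X E. W X \<alpha> * (if reach \<alpha> x then \<phi> (\<alpha> x) else 0))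
     = (\<Sum>a\<in>E x. \<Sum>\<beta>\<in>PiE (X-{x}) E. W X (\<beta>(x:=a)) * (if reach (\<beta>(x:=a)) x then \<phi> ((\<beta>(x:=a)) x) else 0))"
    by (rule decomp[OF xX])
  also have "\<dots> = (\<Sum>a\<in>E x. \<Sum>\<beta>\<in>PiE (X-{x}) E. (w x a * \<phi> a) * (W (X - {x}) \<beta> * (if reach (\<beta>(x := a0 x)) x then 1 else 0)))"
  proof (intro sum.cong refl)
    fix a \<beta>
    have ru: "reach (\<beta>(x:=a)) x = reach (\<beta>(x := a0 x)) x" by (rule reach_upd)
    show "W X (\<beta>(x:=a)) * (if reach (\<beta>(x:=a)) x then \<phi> ((\<beta>(x:=a)) x) else 0)
      = (w x a * \<phi> a) * (W (X - {x}) \<beta> * (if reach (\<beta>(x := a0 x)) x then 1 else 0))"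
      using ru by (simp add: W_upd[OF xX])
  qed
  also have "\<dots> = (\<Sum>a\<in>E x. (w x a * \<phi> a) * K x)"
    unfolding K_def by (simp add: sum_distrib_left)
  also have "\<dots> = K x * (\<Sum>a\<in>E x. w x a * \<phi> a)"
    by (simp add: sum_distrib_left mult.commute)
  finally show ?thesis .
qed

lemma swap_Z:
  "(\<Sum>x\<in>X. \<Sum>\<alpha>\<in>PiE X E. W X \<alpha> * (if reach \<alpha> x then f x (\<alpha> x) else 0))
   = (\<Sum>\<alpha>\<in>PiE X E. W X \<alpha> * (\<Sum>x\<in>{x\<in>X. reach \<alpha> x}. f x (\<alpha> x)))"
proof -
  have "(\<Sum>x\<in>X. \<Sum>\<alpha>\<in>PiE X E. W X \<alpha> * (if reach \<alpha> x then f x (\<alpha> x) else 0))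
     = (\<Sum>\<alpha>\<in>PiE X E. \<Sum>x\<in>X. W X \<alpha> * (if reach \<alpha> x then f x (\<alpha> x) else 0))"
    by (rule sum.swap)
  also have "\<dots> = (\<Sum>\<alpha>\<in>PiE X E. W X \<alpha> * (\<Sum>x\<in>{x\<in>X. reach \<alpha> x}. f x (\<alpha> x)))"
    by (intro sum.cong refl) (simp add: sum_distrib_left sum.inter_filter[OF finX] if_distrib)
  finally show ?thesis .
qed

lemma main:
  assumes eq: "\<And>x. x \<in> X \<Longrightarrow> (\<Sum>a\<in>E x. w x a * (\<rho> x a - lam + u (s x a) - u x)) = 0"
  shows "(\<Sum>x\<in>X. K x * (\<Sum>a\<in>E x. w x a * (\<rho> x a - lam))) = 0"
proof -
  have "(\<Sum>x\<in>X. K x * (\<Sum>a\<in>E x. w x a * (\<rho> x a - lam)))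
     = (\<Sum>x\<in>X. \<Sum>\<alpha>\<in>PiE X E. W X \<alpha> * (if reach \<alpha> x then \<rho> x (\<alpha> x) - lam else 0))"
    by (intro sum.cong refl) (rule L[symmetric])
  also have "\<dots> = (\<Sum>\<alpha>\<in>PiE X E. W X \<alpha> * (\<Sum>x\<in>{x\<in>X. reach \<alpha> x}. \<rho> x (\<alpha> x) - lam))"
    by (rule swap_Z)
  also have "\<dots> = (\<Sum>\<alpha>\<in>PiE X E. W X \<alpha> * (\<Sum>x\<in>{x\<in>X. reach \<alpha> x}. \<rho> x (\<alpha> x) - lam + u (s x (\<alpha> x)) - u x))"
  proof (intro sum.cong refl)
    fix \<alpha> assume al: "\<alpha> \<in> PiE X E"
    have "(\<Sum>x\<in>{x\<in>X. reach \<alpha> x}. \<rho> x (\<alpha> x) - lam + u (s x (\<alpha> x)) - u x)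
        = (\<Sum>x\<in>{x\<in>X. reach \<alpha> x}. \<rho> x (\<alpha> x) - lam) + (\<Sum>x\<in>{x\<in>X. reach \<alpha> x}. u (Fa \<alpha> x) - u x)"
      by (simp add: Fa_def sum.distrib[symmetric] algebra_simps)
    also have "\<dots> = (\<Sum>x\<in>{x\<in>X. reach \<alpha> x}. \<rho> x (\<alpha> x) - lam)" using Z_sum[OF al] by simp
    finally show "W X \<alpha> * (\<Sum>x\<in>{x\<in>X. reach \<alpha> x}. \<rho> x (\<alpha> x) - lam)
      = W X \<alpha> * (\<Sum>x\<in>{x\<in>X. reach \<alpha> x}. \<rho> x (\<alpha> x) - lam + u (s x (\<alpha> x)) - u x)" by simp
  qed
  also have "\<dots> = (\<Sum>x\<in>X. \<Sum>\<alpha>\<in>PiE X E. W X \<alpha> * (if reach \<alpha> x then \<rho> x (\<alpha> x) - lam + u (s x (\<alpha> x)) - u x else 0))"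
    by (rule swap_Z[symmetric])
  also have "\<dots> = (\<Sum>x\<in>X. K x * (\<Sum>a\<in>E x. w x a * (\<rho> x a - lam + u (s x a) - u x)))"
    by (intro sum.cong refl) (rule L)
  also have "\<dots> = 0" using eq by simp
  finally show ?thesis .
qed

lemma W_nonneg: "\<beta> \<in> PiE Y E \<Longrightarrow> Y \<subseteq> X \<Longrightarrow> W Y \<beta> \<ge> 0"
  unfolding W_def by (rule prod_nonneg) (auto intro: less_imp_le wpos)

lemma W_pos: "\<beta> \<in> PiE Y E \<Longrightarrow> Y \<subseteq> X \<Longrightarrow> W Y \<beta> > 0"
  unfolding W_def by (rule prod_pos) (auto intro: wpos)

lemma K_nonneg: "x \<in> X \<Longrightarrow> K x \<ge> 0"
  unfolding K_def by (rule sum_nonneg) (auto intro: W_nonneg)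

lemma K_le1:
  assumes "x \<in> X" shows "K x \<le> 1"
proof -
  have fin: "finite (X - {x})" using finX by simp
  have "K x \<le> (\<Sum>\<beta>\<in>PiE (X - {x}) E. W (X - {x}) \<beta>)"
    unfolding K_def by (rule sum_mono) (auto intro: W_nonneg)
  also have "\<dots> = (\<Prod>y\<in>X - {x}. \<Sum>a\<in>E y. w y a)"
    unfolding W_def by (rule prod_sum_PiE[symmetric]) (use fin finE in auto)
  also have "\<dots> = 1" by (rule prod.neutral) (auto simp: wsum)
  finally show ?thesis .
qed

definition G where "G = {(y, s y a) | y a. y \<in> X \<and> a \<in> E y}"

lemma K_pos:
  assumes x0: "x0 \<in> X" and irr: "\<forall>y\<in>X. (y, x0) \<in> G\<^sup>*"
  shows "K x0 > 0"
proof -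
  define dist where "dist y = (LEAST k. (y, x0) \<in> G ^^ k)" for y
  have dist_ok: "(y, x0) \<in> G ^^ dist y" if "y \<in> X" for y
  proof -
    have "(y, x0) \<in> G\<^sup>*" using irr that by blast
    then obtain k where "(y, x0) \<in> G ^^ k" using rtrancl_imp_relpow by blast
    then show ?thesis unfolding dist_def by (rule LeastI)
  qed
  have step: "\<exists>a\<in>E y. dist (s y a) < dist y" if "y \<in> X" "y \<noteq> x0" for y
  proof -
    have d: "(y, x0) \<in> G ^^ dist y" using dist_ok that by blast
    have "dist y \<noteq> 0"
    proof
      assume "dist y = 0"
      with d have "(y, x0) \<in> Id" by simp
      then show False using that by simp
    qed
    then obtain k where k: "dist y = Suc k" by (cases "dist y") auto
    from relpow_Suc_D2[OF d[unfolded k]] obtain z where z: "(y, z) \<in> G" "(z, x0) \<in> G ^^ k" by blast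
    from z(1) obtain a where a: "a \<in> E y" "z = s y a" unfolding G_def by auto
    have dz: "dist z \<le> k" unfolding dist_def using z(2) by (rule Least_le)
    show ?thesis using a k dz by (intro bexI[of _ a]) auto
  qed
  define \<alpha> where "\<alpha> y = (if y \<in> X then (if y = x0 then a0 y else (SOME a. a \<in> E y \<and> dist (s y a) < dist y)) else undefined)" for y
  have a0E: "a0 y \<in> E y" if "y \<in> X" for y
    unfolding a0_def by (rule someI_ex) (use neE[OF that] in blast)
  have alE: "\<alpha> y \<in> E y \<and> (y \<noteq> x0 \<longrightarrow> dist (s y (\<alpha> y)) < dist y)" if "y \<in> X" for y
  proof (cases "y = x0")
    case True then show ?thesis using that a0E unfolding \<alpha>_def by simp
  next
    case False
    then have "\<exists>a. a \<in> E y \<and> dist (s y a) < dist y" using step that by blast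
    moreover have "\<alpha> y = (SOME a. a \<in> E y \<and> dist (s y a) < dist y)"
      using False that unfolding \<alpha>_def by simp
    ultimately show ?thesis using someI_ex[of "\<lambda>a. a \<in> E y \<and> dist (s y a) < dist y"] False by simp
  qed
  have alPi: "\<alpha> \<in> PiE X E"
    by (rule PiE_I) (use alE in blast, simp add: \<alpha>_def)
  have reach_all: "\<forall>y\<in>X. dist y = k \<longrightarrow> (\<exists>m. (Fa \<alpha> ^^ m) y = x0)" for k
  proof (induction k rule: less_induct)
    case (less k)
    show ?case
    proof (intro ballI impI)
      fix y assume y: "y \<in> X" "dist y = k"
      show "\<exists>m. (Fa \<alpha> ^^ m) y = x0"
      proof (cases "y = x0")
        case True then show ?thesis by (metis funpow_0)
      next
        case False
        then have z: "Fa \<alpha> y \<in> X" "dist (Fa \<alpha> y) < k" using alE y sX unfolding Fa_def by auto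
        then obtain m where "(Fa \<alpha> ^^ m) (Fa \<alpha> y) = x0" using less by blast
        then have "(Fa \<alpha> ^^ Suc m) y = x0" by (metis comp_apply funpow_Suc_right)
        then show ?thesis by blast
      qed
    qed
  qed
  have ra: "reach \<alpha> x0" unfolding reach_def using reach_all by blast
  define \<beta> where "\<beta> = \<alpha>(x0 := undefined)"
  have bPi: "\<beta> \<in> PiE (X - {x0}) E"
  proof (rule PiE_I)
    fix y assume "y \<in> X - {x0}"
    then show "\<beta> y \<in> E y" using alE unfolding \<beta>_def by simp
  next
    fix y assume "y \<notin> X - {x0}"
    then show "\<beta> y = undefined" unfolding \<beta>_def \<alpha>_def by auto
  qed
  have "reach (\<beta>(x0 := a0 x0)) x0" using ra reach_upd[of \<alpha> x0 "a0 x0" "\<alpha> x0"] unfolding \<beta>_def by simp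
  then have pos: "W (X - {x0}) \<beta> * (if reach (\<beta>(x0 := a0 x0)) x0 then 1 else 0) > 0"
    using W_pos[OF bPi] by auto
  show ?thesis unfolding K_def
  proof (rule sum_pos2[where f="\<lambda>b. W (X - {x0}) b * (if reach (b(x0 := a0 x0)) x0 then 1 else 0)", OF _ bPi pos])
    show "finite (PiE (X - {x0}) E)" by (rule finite_PiE) (use finX finE in auto)
    fix b assume "b \<in> PiE (X - {x0}) E"
    then show "0 \<le> W (X - {x0}) b * (if reach (b(x0 := a0 x0)) x0 then 1 else 0)"
      using W_nonneg[of b "X - {x0}"] by simp
  qed
qed

end


lemma exists_irreducible:
  assumes ch: "chain X0 E w s" and ne: "X0 \<noteq> {}"
  shows "\<exists>X x0. X \<subseteq> X0 \<and> x0 \<in> X \<and> chain X E w s \<and> (\<forall>y\<in>X. (y, x0) \<in> (chain.G X E s)\<^sup>*)"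
proof -
  interpret C0: chain X0 E w s by (rule ch)
  define S where "S = {Y. Y \<subseteq> X0 \<and> Y \<noteq> {} \<and> (\<forall>y\<in>Y. \<forall>a\<in>E y. s y a \<in> Y)}"
  have "X0 \<in> S" unfolding S_def using ne C0.sX by blast
  then obtain X where X: "X \<in> S" and Xmin: "\<forall>Y. Y \<in> S \<longrightarrow> card X \<le> card Y"
    using ex_has_least_nat[of "\<lambda>Y. Y \<in> S" X0 card] by blast
  have XX0: "X \<subseteq> X0" and Xne: "X \<noteq> {}" and Xcl: "\<forall>y\<in>X. \<forall>a\<in>E y. s y a \<in> X"
    using X unfolding S_def by auto
  have finX: "finite X" using XX0 C0.finX finite_subset by blast
  have chX: "chain X E w s"
    by unfold_locales (use finX XX0 C0.finE C0.neE C0.wsum C0.wpos Xcl in auto)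
  interpret C: chain X E w s by (rule chX)
  obtain x0 where x0: "x0 \<in> X" using Xne by blast
  have "(y, x0) \<in> C.G\<^sup>*" if y: "y \<in> X" for y
  proof -
    define R where "R = {z. (y, z) \<in> C.G\<^sup>*}"
    have RX: "R \<subseteq> X"
    proof
      fix z assume "z \<in> R"
      then have "(y, z) \<in> C.G\<^sup>*" unfolding R_def by simp
      then show "z \<in> X"
      proof (induction rule: rtrancl_induct)
        case base then show ?case using y .
      next
        case (step z z') then show ?case unfolding C.G_def using Xcl by blast
      qed
    qed
    have "R \<in> S" unfolding S_def
    proof (intro CollectI conjI)
      show "R \<subseteq> X0" using RX XX0 by blast
      show "R \<noteq> {}" unfolding R_def by blast
      show "\<forall>z\<in>R. \<forall>a\<in>E z. s z a \<in> R"
      proof (intro ballI)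
        fix z a assume z: "z \<in> R" and a: "a \<in> E z"
        have "z \<in> X" using z RX by blast
        then have "(z, s z a) \<in> C.G" unfolding C.G_def using a by blast
        then show "s z a \<in> R" using z unfolding R_def by (simp add: rtrancl_into_rtrancl)
      qed
    qed
    then have "card X \<le> card R" using Xmin by blast
    then have "R = X" using RX finX by (meson card_seteq)
    then show ?thesis using x0 unfolding R_def by blast
  qed
  then show ?thesis using XX0 x0 chX by blast
qed

lemma final_bound:
  fixes K c :: "'s \<Rightarrow> real" and lam :: real
  assumes finX: "finite X" and x0: "x0 \<in> X" and Kx0: "K x0 > 0"
    and K01: "\<forall>x\<in>X. 0 \<le> K x \<and> K x \<le> 1"
    and eq: "lam * (\<Sum>x\<in>X. K x) = (\<Sum>x\<in>X. K x * c x)"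
    and int: "\<forall>x\<in>X. real M ^ e * K x * c x \<in> \<int>"
    and lnz: "lam \<noteq> 0" and cardX: "card X \<le> n" and Mpos: "M > 0"
  shows "1 / \<bar>lam\<bar> \<le> real n * real M ^ e"
proof -
  define N where "N = real M ^ e * (\<Sum>x\<in>X. K x)"
  have SK: "(\<Sum>x\<in>X. K x) > 0" by (rule sum_pos2[where f=K, OF finX x0 Kx0]) (use K01 in auto)
  have Npos: "N > 0" unfolding N_def using SK Mpos by simp
  have "lam * N = real M ^ e * (lam * (\<Sum>x\<in>X. K x))" unfolding N_def by simp
  also have "\<dots> = real M ^ e * (\<Sum>x\<in>X. K x * c x)" using eq by simp
  also have "\<dots> = (\<Sum>x\<in>X. real M ^ e * K x * c x)" by (simp add: sum_distrib_left mult.assoc)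
  also have "\<dots> \<in> \<int>" using int by (intro Ints_sum) auto
  finally have li: "lam * N \<in> \<int>" .
  have "lam * N \<noteq> 0" using lnz Npos by simp
  then have ge1: "1 \<le> \<bar>lam * N\<bar>" using li Ints_nonzero_abs_ge1 by blast
  have "(\<Sum>x\<in>X. K x) \<le> (\<Sum>x\<in>X. 1)" by (rule sum_mono) (use K01 in auto)
  also have "\<dots> = real (card X)" by simp
  also have "\<dots> \<le> real n" using cardX by simp
  finally have SKn: "(\<Sum>x\<in>X. K x) \<le> real n" .
  have NB: "N \<le> real n * real M ^ e" unfolding N_def
    using SKn by (simp add: mult.commute mult_right_mono)
  have "1 \<le> \<bar>lam\<bar> * N" using ge1 Npos by (simp add: abs_mult)
  then have "1 / \<bar>lam\<bar> \<le> N" using lnz by (simp add: divide_le_eq mult.commute)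
  then show ?thesis using NB by linarith
qed

lemma prod_if_pow:
  assumes "finite A"
  shows "(\<Prod>y\<in>A. if p y then (c::real) else 1) = c ^ card {y\<in>A. p y}"
proof -
  have "(\<Prod>y\<in>A. if p y then c else 1) = (\<Prod>y\<in>{y\<in>A. p y}. c)"
    by (rule prod.inter_filter[OF assms, symmetric])
  also have "\<dots> = c ^ card {y\<in>A. p y}" by simp
  finally show ?thesis .
qed

context chain
begin

lemma K_int:
  assumes xX: "x \<in> X"
    and wi: "\<forall>y\<in>X. \<forall>a\<in>E y. (if p y then real M else 1) * w y a \<in> \<int>"
  shows "real M ^ card {y\<in>X-{x}. p y} * K x \<in> \<int>"
proof -
  have fin: "finite (X - {x})" using finX by simp
  have "real M ^ card {y\<in>X-{x}. p y} * K x
    = (\<Sum>\<beta>\<in>PiE (X - {x}) E. (\<Prod>y\<in>X-{x}. (if p y then real M else 1) * w y (\<beta> y)) * (if reach (\<beta>(x := a0 x)) x then 1 else 0))"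
    unfolding K_def W_def
    by (simp add: sum_distrib_left prod.distrib prod_if_pow[OF fin] mult.assoc)
  also have "\<dots> \<in> \<int>"
  proof (rule Ints_sum)
    fix \<beta> assume b: "\<beta> \<in> PiE (X - {x}) E"
    have "(\<Prod>y\<in>X-{x}. (if p y then real M else 1) * w y (\<beta> y)) \<in> \<int>"
    proof (rule Ints_prod)
      fix y assume "y \<in> X - {x}"
      then have "\<beta> y \<in> E y" "y \<in> X" using b PiE_mem by auto
      then show "(if p y then real M else 1) * w y (\<beta> y) \<in> \<int>" using wi by blast
    qed
    then show "(\<Prod>y\<in>X-{x}. (if p y then real M else 1) * w y (\<beta> y)) * (if reach (\<beta>(x := a0 x)) x then 1 else 0) \<in> \<int>"
      by (intro Ints_mult) auto
  qed
  finally show ?thesis .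
qed

end

lemma extract_one:
  fixes A B :: "nat \<Rightarrow> nat \<Rightarrow> ereal" and pv :: "nat \<Rightarrow> real"
  assumes A_int: "\<forall>i<m. \<forall>j<n. trop_int_entry (A i j)"
    and B_int: "\<forall>i<m. \<forall>l<q. trop_int_entry (B i l)"
    and A_col: "\<forall>j<n. \<exists>i<m. A i j \<noteq> -\<infinity>"
    and B_row: "\<forall>i<m. \<exists>l<q. B i l \<noteq> -\<infinity>"
    and j: "j < n"
    and eq: "trop_adj A m (trop_mult B q (\<lambda>l. ereal (pv l))) j = ereal c"
  shows "\<exists>l<q. \<exists>r::int. c = real_of_int r + pv l"
proof -
  obtain i0 where "i0 < m" using A_col j by blast
  then have mne: "{..<m} \<noteq> {}" by auto
  define Y where "Y = trop_mult B q (\<lambda>l. ereal (pv l))"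
  have "(INF i\<in>{..<m}. - A i j + Y i) \<in> (\<lambda>i. - A i j + Y i) ` {..<m}"
    by (rule finite_Inf_in) (use mne in \<open>auto simp: inf_min min_def\<close>)
  then obtain i where i: "i < m" and fi: "(INF i\<in>{..<m}. - A i j + Y i) = - A i j + Y i" by auto
  have e1: "- A i j + Y i = ereal c" using eq fi unfolding trop_adj_def Y_def by simp
  obtain l0 where l0: "l0 < q" "B i l0 \<noteq> -\<infinity>" using B_row i by blast
  then have qne: "{..<q} \<noteq> {}" by auto
  have "(SUP l\<in>{..<q}. B i l + ereal (pv l)) \<in> (\<lambda>l. B i l + ereal (pv l)) ` {..<q}"
    by (rule finite_Sup_in) (use qne in \<open>auto simp: sup_max max_def\<close>)
  then obtain l where l: "l < q" and Yl: "Y i = B i l + ereal (pv l)"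
    unfolding Y_def trop_mult_def by auto
  have "B i l0 + ereal (pv l0) \<le> Y i" unfolding Y_def trop_mult_def
    using l0 by (intro SUP_upper) auto
  then have Bl: "B i l \<noteq> -\<infinity>" using l0(2) Yl by auto
  then obtain b :: int where b: "B i l = ereal (of_int b)" using B_int i l unfolding trop_int_entry_def by blast
  have "A i j \<noteq> -\<infinity>" using e1 Yl b by auto
  then obtain a :: int where a: "A i j = ereal (of_int a)" using A_int i j unfolding trop_int_entry_def by blast
  have "c = real_of_int (b - a) + pv l" using e1 Yl a b by simp
  then show ?thesis using l by blast
qed


theorem mainTheorem9:
  fixes A B :: "nat \<Rightarrow> nat \<Rightarrow> ereal" and P :: "nat \<Rightarrow> nat \<Rightarrow> real"
    and Q :: "nat \<Rightarrow> nat \<Rightarrow> int" and M :: nat and m n q :: nat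
    and v :: "nat \<Rightarrow> real" and lam :: real
  assumes n_pos: "n > 0"
    and A_int: "\<forall>i<m. \<forall>j<n. trop_int_entry (A i j)"
    and B_int: "\<forall>i<m. \<forall>l<q. trop_int_entry (B i l)"
    and A_col: "\<forall>j<n. \<exists>i<m. A i j \<noteq> -\<infinity>"
    and B_row: "\<forall>i<m. \<exists>l<q. B i l \<noteq> -\<infinity>"
    and P_stoch: "row_stochastic P q n"
    and M_pos: "M > 0"
    and P_Q: "\<forall>i<q. \<forall>l<n. P i l = real_of_int (Q i l) / real M"
    and bias: "is_bias (shapley_F A B P m n q) n v lam"
    and rho_nz: "lam \<noteq> 0"
  shows "1 / \<bar>lam\<bar> \<le> real n * real M ^ min (card (nondet_states P q n)) (n - 1)"
proof -
  define pv where "pv l = mat_vec P n v l" for l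
  define ND where "ND = nondet_states P q n"
  define e where "e = min (card ND) (n - 1)"
  have ex: "\<forall>j. \<exists>l r. j < n \<longrightarrow> l < q \<and> lam + v j = real_of_int r + pv l"
  proof
    fix j show "\<exists>l r. j < n \<longrightarrow> l < q \<and> lam + v j = real_of_int r + pv l"
    proof (cases "j < n")
      case True
      have "shapley_F A B P m n q v j = ereal (lam + v j)" using bias True unfolding is_bias_def by blast
      then have "trop_adj A m (trop_mult B q (\<lambda>l. ereal (pv l))) j = ereal (lam + v j)"
        unfolding shapley_F_def pv_def .
      from extract_one[OF A_int B_int A_col B_row True this] show ?thesis by blast
    qed simp
  qed
  from choice[OF ex] obtain g where g: "\<forall>j. \<exists>r. j < n \<longrightarrow> g j < q \<and> lam + v j = real_of_int r + pv (g j)"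
    by blast
  from choice[OF g] obtain r where gr0: "\<forall>j. j < n \<longrightarrow> g j < q \<and> lam + v j = real_of_int (r j) + pv (g j)"
    by blast
  have gq: "g j < q" and geq: "lam + v j = real_of_int (r j) + pv (g j)" if "j < n" for j
    using gr0 that by auto
  have Pnn: "P l t \<ge> 0" if "l < q" "t < n" for l t
    using P_stoch that unfolding row_stochastic_def by auto
  have Psum: "(\<Sum>t<n. P l t) = 1" if "l < q" for l
    using P_stoch that unfolding row_stochastic_def by auto
  define Ep where "Ep l = {t. t < n \<and> P l t > 0}" for l
  have Ep_sub: "Ep l \<subseteq> {..<n}" for l unfolding Ep_def by auto
  have finEp: "finite (Ep l)" for l using Ep_sub finite_subset by blast
  have sumEp: "(\<Sum>t\<in>Ep l. P l t * f t) = (\<Sum>t<n. P l t * f t)" if "l < q" for l and f :: "nat \<Rightarrow> real"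
  proof (rule sum.mono_neutral_left)
    show "\<forall>i\<in>{..<n} - Ep l. P l i * f i = 0"
    proof
      fix i assume "i \<in> {..<n} - Ep l"
      then have "i < n" "\<not> P l i > 0" unfolding Ep_def by auto
      then have "P l i = 0" using Pnn[OF that, of i] by simp
      then show "P l i * f i = 0" by simp
    qed
  qed (use Ep_sub in auto)
  have sumEp1: "(\<Sum>t\<in>Ep l. P l t) = 1" if "l < q" for l
    using sumEp[OF that, of "\<lambda>_. 1"] Psum[OF that] by simp
  have Epne: "Ep l \<noteq> {}" if "l < q" for l using sumEp1[OF that] by auto
  have finND: "finite ND" unfolding ND_def nondet_states_def by (rule finite_subset[of _ "{..<q}"]) auto
  have NDq: "ND \<subseteq> {..<q}" unfolding ND_def nondet_states_def by auto
  have Pint: "(if l \<in> ND then real M else 1) * P l t \<in> \<int>" if lq: "l < q" and tn: "t < n" for l t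
  proof (cases "l \<in> ND")
    case True then show ?thesis using P_Q that M_pos by simp
  next
    case False
    show ?thesis
    proof (cases "P l t > 0")
      case pos: True
      have others: "P l t' = 0" if "t' \<in> {..<n} - {t}" for t'
      proof (rule ccontr)
        assume "P l t' \<noteq> 0"
        then have "P l t' > 0" using Pnn[OF lq, of t'] that by simp
        then have "l \<in> ND" unfolding ND_def nondet_states_def using pos lq tn that by blast
        then show False using False by simp
      qed
      have "(\<Sum>t'<n. P l t') = P l t + (\<Sum>t'\<in>{..<n} - {t}. P l t')"
        by (rule sum.remove) (use tn in auto)
      also have "(\<Sum>t'\<in>{..<n} - {t}. P l t') = 0" using others by simp
      finally have "P l t = 1" using Psum[OF lq] by simp
      then show ?thesis using False by simp
    next
      case npos: False
      then have "P l t = 0" using Pnn[OF lq tn] by simp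
      then show ?thesis by simp
    qed
  qed
  have Mge1: "real M \<ge> 1" using M_pos by simp
  have pow_split: "real M ^ e = real M ^ (e - p) * real M ^ p" if "p \<le> e" for p
    using that by (simp add: power_add[symmetric])
  show ?thesis
  proof (cases "inj_on g {..<n}")
    case True
    define Ej where "Ej j = Ep (g j)" for j
    have chJ: "chain {..<n} Ej (\<lambda>j t. P (g j) t) (\<lambda>j t. t)"
    proof (unfold_locales)
      show "finite {..<n}" by simp
    next
      fix x assume "x \<in> {..<n}" then show "finite (Ej x)" unfolding Ej_def using finEp by blast
    next
      fix x assume "x \<in> {..<n}" then show "Ej x \<noteq> {}" unfolding Ej_def using Epne gq by auto
    next
      fix x assume "x \<in> {..<n}" then show "(\<Sum>a\<in>Ej x. P (g x) a) = 1" unfolding Ej_def using sumEp1 gq by auto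
    next
      fix x a assume "x \<in> {..<n}" "a \<in> Ej x" then show "P (g x) a > 0" unfolding Ej_def Ep_def by auto
    next
      fix x a assume "x \<in> {..<n}" "a \<in> Ej x" then show "a \<in> {..<n}" unfolding Ej_def Ep_def by auto
    qed
    obtain X x0 where X: "X \<subseteq> {..<n}" "x0 \<in> X" and chX: "chain X Ej (\<lambda>j t. P (g j) t) (\<lambda>j t. t)"
      and irr: "\<forall>y\<in>X. (y, x0) \<in> (chain.G X Ej (\<lambda>j t. t))\<^sup>*"
      using exists_irreducible[OF chJ] n_pos by auto
    interpret C: chain X Ej "\<lambda>j t. P (g j) t" "\<lambda>j t. t" by (rule chX)
    have eqn: "(\<Sum>t\<in>Ej x. P (g x) t * (real_of_int (r x) - lam + v t - v x)) = 0" if "x \<in> X" for x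
    proof -
      have xn: "x < n" using that X by auto
      have "(\<Sum>t\<in>Ej x. P (g x) t * (real_of_int (r x) - lam + v t - v x))
          = (\<Sum>t<n. P (g x) t * (real_of_int (r x) - lam + v t - v x))"
        unfolding Ej_def by (rule sumEp[OF gq[OF xn]])
      also have "\<dots> = (\<Sum>t<n. (real_of_int (r x) - lam - v x) * P (g x) t + P (g x) t * v t)"
        by (intro sum.cong refl) (simp add: algebra_simps)
      also have "\<dots> = (real_of_int (r x) - lam - v x) * (\<Sum>t<n. P (g x) t) + pv (g x)"
        by (simp add: sum.distrib sum_distrib_left pv_def mat_vec_def)
      also have "\<dots> = 0" using Psum[OF gq[OF xn]] geq[OF xn] by simp
      finally show ?thesis .
    qed
    have M0: "(\<Sum>x\<in>X. C.K x * (\<Sum>t\<in>Ej x. P (g x) t * (real_of_int (r x) - lam))) = 0"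
      by (rule C.main[where u = v]) (rule eqn)
    have inner: "(\<Sum>t\<in>Ej x. P (g x) t * (real_of_int (r x) - lam)) = real_of_int (r x) - lam" if "x \<in> X" for x
      using C.wsum[OF that] by (simp add: sum_distrib_right[symmetric] mult.commute)
    have "(\<Sum>x\<in>X. C.K x * (real_of_int (r x) - lam)) = 0" using M0 inner by simp
    then have eqK: "lam * (\<Sum>x\<in>X. C.K x) = (\<Sum>x\<in>X. C.K x * real_of_int (r x))"
      by (simp add: algebra_simps sum_subtractf sum_distrib_left)
    have int: "\<forall>x\<in>X. real M ^ e * C.K x * real_of_int (r x) \<in> \<int>"
    proof
      fix x assume xX: "x \<in> X"
      define p where "p = card {y\<in>X-{x}. g y \<in> ND}"
      have wi: "\<forall>y\<in>X. \<forall>a\<in>Ej y. (if g y \<in> ND then real M else 1) * P (g y) a \<in> \<int>"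
      proof (intro ballI)
        fix y a assume "y \<in> X" "a \<in> Ej y"
        then have "g y < q" "a < n" using X gq unfolding Ej_def Ep_def by auto
        then show "(if g y \<in> ND then real M else 1) * P (g y) a \<in> \<int>" using Pint by blast
      qed
      have Ki: "real M ^ p * C.K x \<in> \<int>" unfolding p_def by (rule C.K_int[OF xX wi])
      have finX: "finite X" by (rule C.finX)
      have p1: "p \<le> n - 1"
      proof -
        have "p \<le> card (X - {x})" unfolding p_def by (rule card_mono) (use finX in auto)
        also have "\<dots> = card X - 1" using xX finX by simp
        also have "card X \<le> n" using X card_mono[of "{..<n}" X] by simp
        then have "card X - 1 \<le> n - 1" by simp
        finally show ?thesis .
      qed
      have p2: "p \<le> card ND"
      proof -
        have inj: "inj_on g {y\<in>X-{x}. g y \<in> ND}" by (rule inj_on_subset[OF True]) (use X in auto)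
        have "p = card (g ` {y\<in>X-{x}. g y \<in> ND})" unfolding p_def using inj by (simp add: card_image)
        also have "\<dots> \<le> card ND" by (rule card_mono[OF finND]) auto
        finally show ?thesis .
      qed
      have pe: "p \<le> e" unfolding e_def using p1 p2 by simp
      have "real M ^ e * C.K x * real_of_int (r x) = real M ^ (e - p) * (real M ^ p * C.K x) * real_of_int (r x)"
        using pow_split[OF pe] by simp
      also have "\<dots> \<in> \<int>" by (rule Ints_mult[OF Ints_mult[OF _ Ki]]) auto
      finally show "real M ^ e * C.K x * real_of_int (r x) \<in> \<int>" .
    qed
    have K01: "\<forall>x\<in>X. 0 \<le> C.K x \<and> C.K x \<le> 1" using C.K_nonneg C.K_le1 by auto
    have cX: "card X \<le> n" using X card_mono[of "{..<n}" X] by simp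
    show ?thesis
      using final_bound[OF C.finX X(2) C.K_pos[OF X(2) irr] K01 eqK int rho_nz cX M_pos]
      unfolding e_def ND_def .
  next
    case False
    define T where "T = g ` {..<n}"
    have Tq: "T \<subseteq> {..<q}" unfolding T_def using gq by auto
    have cardT: "card T < n"
    proof -
      have "card T \<le> n" unfolding T_def using card_image_le[of "{..<n}" g] by simp
      moreover have "card T \<noteq> n" unfolding T_def using False inj_on_iff_eq_card[of "{..<n}" g] by simp
      ultimately show ?thesis by simp
    qed
    have chL: "chain T Ep (\<lambda>l t. P l t) (\<lambda>l t. g t)"
    proof (unfold_locales)
      show "finite T" unfolding T_def by simp
    next
      fix x assume "x \<in> T" then show "finite (Ep x)" using finEp by blast
    next
      fix x assume "x \<in> T" then show "Ep x \<noteq> {}" using Epne Tq by auto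
    next
      fix x assume "x \<in> T" then show "(\<Sum>a\<in>Ep x. P x a) = 1" using sumEp1 Tq by auto
    next
      fix x a assume "x \<in> T" "a \<in> Ep x" then show "P x a > 0" unfolding Ep_def by auto
    next
      fix x a assume "x \<in> T" "a \<in> Ep x" then show "g a \<in> T" unfolding Ep_def T_def by auto
    qed
    have Tne: "T \<noteq> {}" unfolding T_def using n_pos by auto
    obtain X x0 where X: "X \<subseteq> T" "x0 \<in> X" and chX: "chain X Ep (\<lambda>l t. P l t) (\<lambda>l t. g t)"
      and irr: "\<forall>y\<in>X. (y, x0) \<in> (chain.G X Ep (\<lambda>l t. g t))\<^sup>*"
      using exists_irreducible[OF chL Tne] by auto
    interpret C: chain X Ep "\<lambda>l t. P l t" "\<lambda>l t. g t" by (rule chX)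
    have eqn: "(\<Sum>t\<in>Ep x. P x t * (real_of_int (r t) - lam + pv (g t) - pv x)) = 0" if "x \<in> X" for x
    proof -
      have xq: "x < q" using that X Tq by auto
      have "(\<Sum>t\<in>Ep x. P x t * (real_of_int (r t) - lam + pv (g t) - pv x))
          = (\<Sum>t<n. P x t * (real_of_int (r t) - lam + pv (g t) - pv x))"
        by (rule sumEp[OF xq])
      also have "\<dots> = (\<Sum>t<n. P x t * v t - pv x * P x t)"
      proof (intro sum.cong refl)
        fix t assume t: "t \<in> {..<n}"
        have h: "real_of_int (r t) - lam + pv (g t) = v t" using geq[of t] t by simp
        show "P x t * (real_of_int (r t) - lam + pv (g t) - pv x) = P x t * v t - pv x * P x t"
          unfolding h by (simp add: algebra_simps)
      qed
      also have "\<dots> = pv x - pv x * (\<Sum>t<n. P x t)"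
        by (simp add: sum_subtractf sum_distrib_left pv_def mat_vec_def)
      also have "\<dots> = 0" using Psum[OF xq] by simp
      finally show ?thesis .
    qed
    have M0: "(\<Sum>x\<in>X. C.K x * (\<Sum>t\<in>Ep x. P x t * (real_of_int (r t) - lam))) = 0"
      by (rule C.main[where u = pv]) (rule eqn)
    define c where "c x = (\<Sum>t\<in>Ep x. P x t * real_of_int (r t))" for x
    have inner: "(\<Sum>t\<in>Ep x. P x t * (real_of_int (r t) - lam)) = c x - lam" if "x \<in> X" for x
      using C.wsum[OF that] unfolding c_def
      by (simp add: right_diff_distrib sum_subtractf sum_distrib_right[symmetric])
    have "(\<Sum>x\<in>X. C.K x * (c x - lam)) = 0" using M0 inner by simp
    then have eqK: "lam * (\<Sum>x\<in>X. C.K x) = (\<Sum>x\<in>X. C.K x * c x)"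
      by (simp add: algebra_simps sum_subtractf sum_distrib_left)
    have finX: "finite X" by (rule C.finX)
    have int: "\<forall>x\<in>X. real M ^ e * C.K x * c x \<in> \<int>"
    proof
      fix x assume xX: "x \<in> X"
      have xq: "x < q" using xX X Tq by auto
      define p where "p = card {y\<in>X-{x}. y \<in> ND}"
      define d where "d = (if x \<in> ND then 1 else 0 :: nat)"
      have wi: "\<forall>y\<in>X. \<forall>a\<in>Ep y. (if y \<in> ND then real M else 1) * P y a \<in> \<int>"
      proof (intro ballI)
        fix y a assume "y \<in> X" "a \<in> Ep y"
        then have "y < q" "a < n" using X Tq unfolding Ep_def by auto
        then show "(if y \<in> ND then real M else 1) * P y a \<in> \<int>" using Pint by blast
      qed
      have Ki: "real M ^ p * C.K x \<in> \<int>" unfolding p_def by (rule C.K_int[OF xX wi])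
      have ci: "real M ^ d * c x \<in> \<int>"
      proof -
        have "real M ^ d * c x = (\<Sum>t\<in>Ep x. ((if x \<in> ND then real M else 1) * P x t) * real_of_int (r t))"
          unfolding c_def d_def by (simp add: sum_distrib_left mult.assoc)
        also have "\<dots> \<in> \<int>"
        proof (rule Ints_sum)
          fix t assume "t \<in> Ep x"
          then have "t < n" unfolding Ep_def by auto
          then show "((if x \<in> ND then real M else 1) * P x t) * real_of_int (r t) \<in> \<int>"
            by (rule Ints_mult[OF Pint[OF xq]]) auto
        qed
        finally show ?thesis .
      qed
      have pd: "p + d = card {y\<in>X. y \<in> ND}"
      proof (cases "x \<in> ND")
        case True
        have "{y\<in>X. y \<in> ND} = insert x {y\<in>X-{x}. y \<in> ND}" using True xX by auto
        then show ?thesis unfolding p_def d_def using True finX by simp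
      next
        case False
        have "{y\<in>X. y \<in> ND} = {y\<in>X-{x}. y \<in> ND}" using False by auto
        then show ?thesis unfolding p_def d_def using False by simp
      qed
      have q1: "card {y\<in>X. y \<in> ND} \<le> card ND" by (rule card_mono[OF finND]) auto
      have q2: "card {y\<in>X. y \<in> ND} \<le> n - 1"
      proof -
        have "card {y\<in>X. y \<in> ND} \<le> card X" by (rule card_mono[OF finX]) auto
        also have "card X \<le> card T" by (rule card_mono) (use X T_def in auto)
        finally show ?thesis using cardT by simp
      qed
      have pe: "p + d \<le> e" unfolding e_def using pd q1 q2 by simp
      have "real M ^ e * C.K x * c x = real M ^ (e - (p + d)) * (real M ^ p * C.K x) * (real M ^ d * c x)"
        using pow_split[OF pe] by (simp add: power_add algebra_simps)
      also have "\<dots> \<in> \<int>" by (rule Ints_mult[OF Ints_mult[OF _ Ki] ci]) auto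
      finally show "real M ^ e * C.K x * c x \<in> \<int>" .
    qed
    have K01: "\<forall>x\<in>X. 0 \<le> C.K x \<and> C.K x \<le> 1" using C.K_nonneg C.K_le1 by auto
    have cX: "card X \<le> n"
    proof -
      have "card X \<le> card T" by (rule card_mono) (use X T_def in auto)
      then show ?thesis using cardT by simp
    qed
    show ?thesis
      using final_bound[OF C.finX X(2) C.K_pos[OF X(2) irr] K01 eqK int rho_nz cX M_pos]
      unfolding e_def ND_def .
  qed
qed

end
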